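(* Let $(\vec u,\vec B)$ and $(\vec t,\vec C)$ be proper factorization patterns over $A$, and let $(v_n)_n$, $(w_n)_n$ be sequences of words such that $(v_n)_n$ is $(\vec u,\vec B)$-adequate, $(w_n)_n$ is $(\vec t,\vec C)$-adequate, and $v_n\sim_n w_n$ for every $n\ge0$. Then $\vec u=\vec t$ and $\vec B=\vec C$.
   Context: For $B\subseteq A$, $B^{\circledast}$ is the set of words over $B$ in which every symbol of $B$ occurs. A factorization pattern is $(\vec u,\vec B)$ with $\vec u=(u_0,\dots,u_p)\in(A^* )^{p+1}$, $\vec B=(B_1,\dots,B_p)$ nonempty subsets of $A$, $p\ge0$; $L(\vec u,\vec B,n)=u_0(B_1^{\circledast})^nu_1\cdots(B_p^{\circledast})^nu_p$; $(w_n)_n$ is $(\vec u,\vec B)$-adequate if $w_n\in L(\vec u,\vec B,n)$ for all $n$. The pattern is proper if (i) for all $i=0,\dots,p-1$ the last symbol of $u_i$ (if $u_i$ nonempty) is not in $B_{i+1}$, and for all $i=1,\dots,p$ the first symbol of $u_i$ (if nonempty) is not in $B_i$; and (ii) for all $i=1,\dots,p-1$, if $u_i=\varepsilon$ then $B_i\not\subseteq B_{i+1}$ and $B_{i+1}\not\subseteq B_i$. For words $v,w$, $v\sim_n w$ means that $v$ and $w$ have the same subwords (subsequences) of length at most $n$. *)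

theory Defs
  imports Main "HOL-Library.Sublist"
begin

text \<open>Words over the alphabet are lists. B^circledast: words over B in which every symbol of B occurs.\<close>
definition full_words :: "'a set \<Rightarrow> 'a list set" where
  "full_words B = {w. set w = B}"

fun lang_pow :: "'a list set \<Rightarrow> nat \<Rightarrow> 'a list set" where
  "lang_pow L 0 = {[]}"
| "lang_pow L (Suc n) = {x @ y | x y. x \<in> L \<and> y \<in> lang_pow L n}"

text \<open>L(u,B,n) = u_0 (B_1^circledast)^n u_1 ... (B_p^circledast)^n u_p, where u = [u_0,...,u_p], B = [B_1,...,B_p].\<close>
fun pat_lang :: "'a list list \<Rightarrow> 'a set list \<Rightarrow> nat \<Rightarrow> 'a list set" where
  "pat_lang [u0] [] n = {u0}"
| "pat_lang (u0 # us) (B1 # Bs) n =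
     {u0 @ x @ y | x y. x \<in> lang_pow (full_words B1) n \<and> y \<in> pat_lang us Bs n}"
| "pat_lang _ _ n = {}"

definition fact_pattern :: "'a set \<Rightarrow> 'a list list \<Rightarrow> 'a set list \<Rightarrow> bool" where
  "fact_pattern A u B \<longleftrightarrow> length u = length B + 1 \<and>
     (\<forall>i < length u. set (u ! i) \<subseteq> A) \<and>
     (\<forall>i < length B. B ! i \<noteq> {} \<and> B ! i \<subseteq> A)"

text \<open>Properness, with 0-based list indices: u ! i is u_i, B ! i is B_{i+1}.\<close>
definition proper_pattern :: "'a set \<Rightarrow> 'a list list \<Rightarrow> 'a set list \<Rightarrow> bool" where
  "proper_pattern A u B \<longleftrightarrow> fact_pattern A u B \<and>
     (\<forall>i < length B. u ! i \<noteq> [] \<longrightarrow> last (u ! i) \<notin> B ! i) \<and>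
     (\<forall>i < length B. u ! (Suc i) \<noteq> [] \<longrightarrow> hd (u ! (Suc i)) \<notin> B ! i) \<and>
     (\<forall>i. 1 \<le> i \<and> i + 1 < length u \<and> u ! i = [] \<longrightarrow>
          \<not> (B ! (i - 1) \<subseteq> B ! i) \<and> \<not> (B ! i \<subseteq> B ! (i - 1)))"

definition adequate :: "'a list list \<Rightarrow> 'a set list \<Rightarrow> (nat \<Rightarrow> 'a list) \<Rightarrow> bool" where
  "adequate u B w \<longleftrightarrow> (\<forall>n. w n \<in> pat_lang u B n)"

definition sim_n :: "nat \<Rightarrow> 'a list \<Rightarrow> 'a list \<Rightarrow> bool" where
  "sim_n n v w \<longleftrightarrow> (\<forall>x. length x \<le> n \<longrightarrow> (subseq x v \<longleftrightarrow> subseq x w))"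

end

theory Submission
  imports Defs
begin

datatype 'a atom = ALet 'a | AStar "'a set"

fun acc :: "'a atom \<Rightarrow> 'a set" where
  "acc (ALet a) = {a}" | "acc (AStar B) = B"

fun emb :: "'a atom list \<Rightarrow> 'a list \<Rightarrow> bool" where
  "emb [] [] = True"
| "emb [] (c#w) = False"
| "emb (ALet a # r) [] = emb r []"
| "emb (ALet a # r) (c#w) = (emb r (c#w) \<or> (c = a \<and> emb r w))"
| "emb (AStar B # r) [] = emb r []"
| "emb (AStar B # r) (c#w) = (emb r (c#w) \<or> (c \<in> B \<and> emb (AStar B # r) w))"

fun ok :: "'a atom \<Rightarrow> 'a atom \<Rightarrow> bool" where
  "ok (ALet a) (ALet b) = True"
| "ok (ALet a) (AStar B) = (a \<notin> B)"
| "ok (AStar B) (ALet a) = (a \<notin> B)"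
| "ok (AStar B) (AStar C) = (\<not> B \<subseteq> C \<and> \<not> C \<subseteq> B)"

fun red :: "'a atom list \<Rightarrow> bool" where
  "red [] = True"
| "red [x] = (acc x \<noteq> {})"
| "red (x # y # r) = (acc x \<noteq> {} \<and> ok x y \<and> red (y # r))"

lemma red_Cons: "red (x # r) \<longleftrightarrow> acc x \<noteq> {} \<and> (r \<noteq> [] \<longrightarrow> ok x (hd r)) \<and> red r"
  by (cases r) auto

lemma emb_Nil: "emb r []"
proof (induction r)
  case (Cons x r) then show ?case by (cases x) auto
qed simp

lemma emb_Nil_atoms: "emb [] w \<longleftrightarrow> w = []"
  by (cases w) auto

lemma emb_mono: "emb r w \<Longrightarrow> emb (x#r) w"
  by (cases x; cases w) auto

lemma emb_down1: "emb r (c#w) \<Longrightarrow> emb r w"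
proof (induction r arbitrary: c w)
  case (Cons x r) then show ?case by (cases x) (auto intro: emb_mono)
qed simp

lemma emb_cons_step:
  assumes "\<And>r. emb r ys \<Longrightarrow> emb r xs" "emb r (y#ys)"
  shows "emb r (y#xs)"
  using assms(2)
proof (induction r)
  case (Cons x r) then show ?case using assms(1) by (cases x) auto
qed simp

lemma subseq_emb: "subseq v w \<Longrightarrow> emb r w \<Longrightarrow> emb r v"
proof (induction v w arbitrary: r rule: list_emb.induct)
  case (list_emb_Nil ys) then show ?case by (simp add: emb_Nil)
next
  case (list_emb_Cons xs ys y) then show ?case using emb_down1[OF list_emb_Cons.prems] by blast
next
  case (list_emb_Cons2 x y xs ys)
  have "x = y" using list_emb_Cons2.hyps(1) by simp
  then show ?case using emb_cons_step[OF list_emb_Cons2.IH list_emb_Cons2.prems] by simp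
qed

lemma R1: "emb (ALet a # r) (a#w) = emb r w"
  by (auto dest: emb_down1)

lemma R2: "c \<notin> acc x \<Longrightarrow> emb (x#r) (c#w) = emb r (c#w)"
  by (cases x) auto

lemma R3: "c \<in> B \<Longrightarrow> emb (AStar B # r) (c#w) = emb (AStar B # r) w"
  by (auto dest: emb_down1 intro: emb_mono)

lemma cons_acc: "c \<in> acc x \<Longrightarrow> emb r w \<Longrightarrow> emb (x#r) (c#w)"
  by (cases x) (auto intro: emb_mono)

lemma strict: "red (x#d) \<Longrightarrow> \<not> (\<forall>w. emb (x#d) w \<longrightarrow> emb d w)"
proof (induction d arbitrary: x)
  case Nil
  then obtain c where "c \<in> acc x" by auto
  then have "emb [x] [c]" by (intro cons_acc) (auto simp: emb_Nil)
  then show ?case by auto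
next
  case (Cons z d)
  from Cons.prems have ax: "acc x \<noteq> {}" and okxz: "ok x z" and rz: "red (z#d)" by auto
  obtain c where c1: "c \<in> acc x" and c2: "c \<notin> acc z \<or> z = ALet c"
  proof (cases x)
    case (ALet a)
    then show ?thesis using that okxz by (cases z) auto
  next
    case (AStar B)
    show ?thesis
    proof (cases z)
      case (ALet b)
      then show ?thesis using that okxz ax AStar by auto
    next
      case (AStar C)
      then show ?thesis using that okxz \<open>x = AStar B\<close> by auto
    qed
  qed
  show ?case
  proof
    assume H: "\<forall>w. emb (x#z#d) w \<longrightarrow> emb (z#d) w"
    have "\<forall>w. emb (z#d) w \<longrightarrow> emb d w"
    proof (intro allI impI)
      fix w assume "emb (z#d) w"
      then have "emb (x#z#d) (c#w)" using cons_acc[OF c1] by blast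
      then have "emb (z#d) (c#w)" using H by blast
      then show "emb d w" using c2 R2 R1 emb_down1 by metis
    qed
    then show False using Cons.IH rz by blast
  qed
qed


definition agree :: "'a set \<Rightarrow> 'a atom list \<Rightarrow> 'a atom list \<Rightarrow> bool" where
  "agree X a b \<longleftrightarrow> (\<forall>w. (w = [] \<or> hd w \<notin> X) \<longrightarrow> (emb a w \<longleftrightarrow> emb b w))"

lemma agree_sym: "agree X a b \<Longrightarrow> agree X b a"
  unfolding agree_def by blast

lemma agreeD: "agree X a b \<Longrightarrow> c \<notin> X \<Longrightarrow> emb a (c#w) \<longleftrightarrow> emb b (c#w)"
  unfolding agree_def by auto

lemma K:
  assumes "c \<notin> X" "c \<in> acc y" "c \<notin> acc x" "agree X (x#a) (y#b)" "emb (y#b) w"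
  shows "emb a w"
proof (cases y)
  case (AStar C)
  then have "emb (y#b) (c#w)" using R3 assms by auto
  then have "emb (x#a) (c#w)" using agreeD[OF assms(4,1)] by blast
  then show ?thesis using R2[OF assms(3)] emb_down1 by metis
next
  case (ALet c')
  then have cc: "c' = c" using assms(2) by simp
  show ?thesis
  proof (cases w)
    case Nil then show ?thesis by (simp add: emb_Nil)
  next
    case (Cons d w')
    then have "emb b (d#w') \<or> (d = c \<and> emb b w')" using assms(5) ALet cc by simp
    then show ?thesis
    proof
      assume "emb b (d#w')"
      then have "emb (y#b) (c#d#w')" using cons_acc[OF assms(2)] by blast
      then have "emb (x#a) (c#d#w')" using agreeD[OF assms(4,1)] by blast
      then show ?thesis using R2[OF assms(3)] emb_down1 Cons by metis
    next
      assume "d = c \<and> emb b w'"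
      then have "emb (x#a) (c#w')" using agreeD[OF assms(4,1)] assms(5) Cons by blast
      then show ?thesis using R2[OF assms(3)] Cons \<open>d = c \<and> emb b w'\<close> by metis
    qed
  qed
qed

lemma K2:
  assumes "red (x#a)" "c \<notin> X" "c \<in> acc y" "c \<notin> acc x" "d \<notin> X" "d \<in> acc x" "d \<notin> acc y"
    "agree X (x#a) (y#b)"
  shows False
proof -
  have "\<forall>w. emb (x#a) w \<longrightarrow> emb a w"
  proof (intro allI impI)
    fix w assume "emb (x#a) w"
    then have "emb b w" using K[OF assms(5,6,7) agree_sym[OF assms(8)]] by blast
    then have "emb (y#b) w" by (rule emb_mono)
    then show "emb a w" using K[OF assms(2,3,4,8)] by blast
  qed
  then show False using strict assms(1) by blast
qed

lemma K3:
  assumes "red (y#b)" "\<forall>w. emb (x#a) w \<longleftrightarrow> emb (y#b) w" "c \<in> acc x" "c \<notin> acc y"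
  shows False
proof -
  have ag: "agree {} (y#b) (x#a)" using assms(2) unfolding agree_def by blast
  have "\<forall>w. emb (y#b) w \<longrightarrow> emb b w"
    using K[of c "{}" x y b a] ag assms by blast
  then show False using strict assms(1) by blast
qed

lemma L3:
  assumes "red (ALet a # a')" "a \<notin> X" "c' \<in> C'" "c' \<notin> X" "agree X (ALet a # a') (AStar C' # b')"
  shows False
proof (cases "a \<in> C'")
  case True
  have E: "emb a' w \<longleftrightarrow> emb (AStar C' # b') w" for w
  proof -
    have "emb a' w \<longleftrightarrow> emb (ALet a # a') (a#w)" by (simp only: R1)
    also have "\<dots> \<longleftrightarrow> emb (AStar C' # b') (a#w)" using agreeD[OF assms(5,2)] by blast
    also have "\<dots> \<longleftrightarrow> emb (AStar C' # b') w" using R3[OF True] by blast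
    finally show ?thesis .
  qed
  have "\<forall>w. emb (ALet a # a') w \<longrightarrow> emb a' w"
  proof (intro allI impI)
    fix w assume H: "emb (ALet a # a') w"
    show "emb a' w"
    proof (cases w)
      case Nil then show ?thesis by (simp add: emb_Nil)
    next
      case (Cons d w')
      then have "emb a' (d#w') \<or> (d = a \<and> emb a' w')" using H by simp
      then show ?thesis
      proof
        assume "d = a \<and> emb a' w'"
        then show ?thesis using E R3[OF True] Cons by metis
      qed (simp add: Cons)
    qed
  qed
  then show False using strict assms(1) by blast
next
  case False
  have "c' \<noteq> a" using False assms(3) by auto
  show False
    by (rule K2[OF assms(1) assms(4), of "AStar C'" a b']) (use assms False \<open>c' \<noteq> a\<close> in auto)
qed

lemma red_tl: "red (x#r) \<Longrightarrow> red r"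
  by (simp add: red_Cons)

lemma red_hd: "red r \<Longrightarrow> r \<noteq> [] \<Longrightarrow> acc (hd r) \<noteq> {}"
  by (cases r) (auto simp: red_Cons)

lemma emb_Star_nonC: "d \<notin> C \<Longrightarrow> emb (AStar C # r) (d#w) = emb r (d#w)"
  by simp

lemma G:
  "red a \<Longrightarrow> red b \<Longrightarrow> (a \<noteq> [] \<longrightarrow> \<not> acc (hd a) \<subseteq> X) \<Longrightarrow> (b \<noteq> [] \<longrightarrow> \<not> acc (hd b) \<subseteq> X)
   \<Longrightarrow> agree X a b \<Longrightarrow> a = b"
proof (induction "length a + length b" arbitrary: X a b rule: less_induct)
  case less
  show ?case
  proof (cases a)
    case Nil
    show ?thesis
    proof (cases b)
      case (Cons y b')
      then obtain c where c: "c \<in> acc y" "c \<notin> X" using less.prems by auto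
      have "emb b [c]" using Cons cons_acc[OF c(1)] emb_Nil by blast
      then have "emb a [c]" using agreeD[OF less.prems(5) c(2)] by blast
      then show ?thesis using Nil by simp
    qed (simp add: Nil)
  next
    case (Cons x a')
    note a = Cons
    show ?thesis
    proof (cases b)
      case Nil
      then obtain c where c: "c \<in> acc x" "c \<notin> X" using less.prems a by auto
      have "emb a [c]" using a cons_acc[OF c(1)] emb_Nil by blast
      then have "emb b [c]" using agreeD[OF less.prems(5) c(2)] by blast
      then show ?thesis using Nil by simp
    next
      case (Cons y b')
      note b = Cons
      have ra': "red a'" and rb': "red b'" using less.prems a b red_tl by blast+
      have ha': "a' \<noteq> [] \<longrightarrow> \<not> acc (hd a') \<subseteq> {}" using red_hd[OF ra'] by blast
      have hb': "b' \<noteq> [] \<longrightarrow> \<not> acc (hd b') \<subseteq> {}" using red_hd[OF rb'] by blast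
      have ag: "agree X (x#a') (y#b')" using less.prems a b by simp
      have hx: "\<not> acc x \<subseteq> X" and hy: "\<not> acc y \<subseteq> X" using less.prems a b by auto
      have rx: "red (x#a')" and ry: "red (y#b')" using less.prems a b by auto
      show ?thesis
      proof (cases x)
        case (ALet p)
        note xp = ALet
        show ?thesis
        proof (cases y)
          case (ALet q)
          have pX: "p \<notin> X" and qX: "q \<notin> X" using hx hy xp ALet by auto
          show ?thesis
          proof (cases "p = q")
            case True
            have "agree {} a' b'" unfolding agree_def
            proof (intro allI impI)
              fix w
              have "emb a' w \<longleftrightarrow> emb (x#a') (p#w)" by (simp only: xp R1)
              also have "\<dots> \<longleftrightarrow> emb (y#b') (p#w)" using agreeD[OF ag pX] by blast
              also have "\<dots> \<longleftrightarrow> emb b' w" by (simp only: ALet True R1)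
              finally show "emb a' w \<longleftrightarrow> emb b' w" .
            qed
            then have "a' = b'" using less.hyps[of a' b' "{}"] a b ra' rb' ha' hb' by simp
            then show ?thesis using a b xp ALet True by simp
          next
            case False
            show ?thesis
              by (rule K2[OF rx qX _ _ pX _ _ ag, THEN FalseE]) (use xp ALet False in auto)
          qed
        next
          case (AStar C')
          then obtain c' where "c' \<in> C'" "c' \<notin> X" using hy by auto
          then show ?thesis using L3[of p a' X c' C' b'] rx ag xp AStar hx by auto
        qed
      next
        case (AStar C)
        note xC = AStar
        obtain c where cC: "c \<in> C" "c \<notin> X" using hx xC by auto
        show ?thesis
        proof (cases y)
          case (ALet q)
          then show ?thesis using L3[of q b' X c C a'] ry agree_sym[OF ag] xC hy cC by auto
        next
          case (AStar C')
          note yC = AStar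
          obtain c' where cC': "c' \<in> C'" "c' \<notin> X" using hy yC by auto
          have full: "emb (x#a') w \<longleftrightarrow> emb (y#b') w" for w
          proof (cases "c \<in> C'")
            case True
            have "emb (x#a') w \<longleftrightarrow> emb (x#a') (c#w)" using R3[OF cC(1)] xC by simp
            also have "\<dots> \<longleftrightarrow> emb (y#b') (c#w)" using agreeD[OF ag cC(2)] by blast
            also have "\<dots> \<longleftrightarrow> emb (y#b') w" using R3[OF True] yC by simp
            finally show ?thesis .
          next
            case F1: False
            show ?thesis
            proof (cases "c' \<in> C")
              case True
              have "emb (x#a') w \<longleftrightarrow> emb (x#a') (c'#w)" using R3[OF True] xC by simp
              also have "\<dots> \<longleftrightarrow> emb (y#b') (c'#w)" using agreeD[OF ag cC'(2)] by blast
              also have "\<dots> \<longleftrightarrow> emb (y#b') w" using R3[OF cC'(1)] yC by simp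
              finally show ?thesis .
            next
              case False
              show ?thesis
                by (rule K2[OF rx cC'(2) _ _ cC(2) _ _ ag, THEN FalseE]) (use xC yC False F1 cC cC' in auto)
            qed
          qed
          have CC: "C = C'"
          proof (rule ccontr)
            assume "C \<noteq> C'"
            then obtain d where "d \<in> C \<and> d \<notin> C' \<or> d \<in> C' \<and> d \<notin> C" by blast
            then show False
            proof
              assume "d \<in> C \<and> d \<notin> C'"
              then show False using K3[OF ry, of x a' d] full xC yC by auto
            next
              assume "d \<in> C' \<and> d \<notin> C"
              then show False using K3[OF rx, of y b' d] full xC yC by auto
            qed
          qed
          have ag': "agree C a' b'" unfolding agree_def
          proof (intro allI impI)
            fix w assume "w = [] \<or> hd w \<notin> C"
            then show "emb a' w \<longleftrightarrow> emb b' w"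
            proof
              assume "w = []" then show ?thesis by (simp add: emb_Nil)
            next
              assume hw: "hd w \<notin> C"
              show ?thesis
              proof (cases w)
                case Nil then show ?thesis by (simp add: emb_Nil)
              next
                case (Cons d w')
                then have "d \<notin> C" using hw by simp
                then show ?thesis using full[of w] Cons xC yC CC by simp
              qed
            qed
          qed
          have h1: "a' \<noteq> [] \<longrightarrow> \<not> acc (hd a') \<subseteq> C"
          proof
            assume "a' \<noteq> []"
            then obtain z r where "a' = z # r" by (cases a') auto
            then have "ok (AStar C) z" using rx xC by (simp add: red_Cons)
            then show "\<not> acc (hd a') \<subseteq> C" using \<open>a' = z # r\<close> by (cases z) auto
          qed
          have h2: "b' \<noteq> [] \<longrightarrow> \<not> acc (hd b') \<subseteq> C"
          proof
            assume "b' \<noteq> []"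
            then obtain z r where "b' = z # r" by (cases b') auto
            then have "ok (AStar C) z" using ry yC CC by (simp add: red_Cons)
            then show "\<not> acc (hd b') \<subseteq> C" using \<open>b' = z # r\<close> by (cases z) auto
          qed
          have "a' = b'" using less.hyps[of a' b' C] a b ra' rb' h1 h2 ag' by simp
          then show ?thesis using a b xC yC CC by simp
        qed
      qed
    qed
  qed
qed


fun atoms :: "'a list list \<Rightarrow> 'a set list \<Rightarrow> 'a atom list" where
  "atoms [u0] [] = map ALet u0"
| "atoms (u0 # us) (B # Bs) = map ALet u0 @ AStar B # atoms us Bs"
| "atoms _ _ = []"

lemma emb_map_Let_app: "emb r z \<Longrightarrow> emb (map ALet u @ r) (u @ z)"
  by (induction u) auto

lemma emb_star_app: "set x \<subseteq> B \<Longrightarrow> emb r y \<Longrightarrow> emb (AStar B # r) (x @ y)"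
  by (induction x) (auto intro: emb_mono)

lemma lang_pow_set: "x \<in> lang_pow (full_words B) n \<Longrightarrow> set x \<subseteq> B"
proof (induction n arbitrary: x)
  case (Suc n)
  then obtain x1 x2 where "x = x1 @ x2" "set x1 = B" "x2 \<in> lang_pow (full_words B) n"
    by (auto simp: full_words_def)
  then show ?case using Suc.IH by auto
qed simp

lemma pat_emb: "z \<in> pat_lang u B n \<Longrightarrow> emb (atoms u B) z"
proof (induction u B n arbitrary: z rule: pat_lang.induct)
  case (1 u0 n)
  then show ?case using emb_map_Let_app[of "[]" "[]" u0] by (simp add: emb_Nil)
next
  case (2 u0 us B1 Bs n)
  obtain x y where xy: "z = u0 @ x @ y" "x \<in> lang_pow (full_words B1) n" "y \<in> pat_lang us Bs n"
    using "2.prems" by auto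
  have "emb (atoms us Bs) y" by (rule "2.IH"[OF xy(3)])
  then have "emb (AStar B1 # atoms us Bs) (x @ y)"
    by (rule emb_star_app[OF lang_pow_set[OF xy(2)]])
  then show ?case using xy(1) emb_map_Let_app by simp
qed simp_all

lemma emb_map_Let_dec: "emb (map ALet u @ r) y \<Longrightarrow> \<exists>y1 y2. y = y1 @ y2 \<and> subseq y1 u \<and> emb r y2"
proof (induction u arbitrary: y)
  case Nil then show ?case by force
next
  case (Cons a u)
  show ?case
  proof (cases y)
    case Nil then show ?thesis using emb_Nil by fastforce
  next
    case (Cons c y')
    then have "emb (map ALet u @ r) (c#y') \<or> (c = a \<and> emb (map ALet u @ r) y')"
      using Cons.prems by simp
    then show ?thesis
    proof
      assume "emb (map ALet u @ r) (c#y')"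
      then obtain y1 y2 where h: "c#y' = y1 @ y2" "subseq y1 u" "emb r y2" using Cons.IH by blast
      have "y = y1 @ y2 \<and> subseq y1 (a#u) \<and> emb r y2"
        using h \<open>y = c # y'\<close> by (simp add: list_emb_Cons)
      then show ?thesis by blast
    next
      assume ca: "c = a \<and> emb (map ALet u @ r) y'"
      then obtain y1 y2 where h: "y' = y1 @ y2" "subseq y1 u" "emb r y2" using Cons.IH by blast
      have "y = (a#y1) @ y2 \<and> subseq (a#y1) (a#u) \<and> emb r y2"
        using h \<open>y = c # y'\<close> ca by simp
      then show ?thesis by blast
    qed
  qed
qed

lemma emb_star_dec: "emb (AStar B # r) y \<Longrightarrow> \<exists>y1 y2. y = y1 @ y2 \<and> set y1 \<subseteq> B \<and> emb r y2"
proof (induction y)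
  case Nil then show ?case using emb_Nil by fastforce
next
  case (Cons c y)
  then have "emb r (c#y) \<or> (c \<in> B \<and> emb (AStar B # r) y)" by simp
  then show ?case
  proof
    assume "emb r (c#y)" then show ?thesis by force
  next
    assume "c \<in> B \<and> emb (AStar B # r) y"
    then obtain y1 y2 where "y = y1 @ y2" "set y1 \<subseteq> B" "emb r y2" using Cons.IH by blast
    then show ?thesis using \<open>c \<in> B \<and> _\<close> by (metis append_Cons insert_subset list.set(2))
  qed
qed

lemma pow_sub: "set y \<subseteq> B \<Longrightarrow> length y \<le> n \<Longrightarrow> x \<in> lang_pow (full_words B) n \<Longrightarrow> subseq y x"
proof (induction n arbitrary: y x)
  case 0 then show ?case by simp
next
  case (Suc n)
  then obtain x1 x2 where x: "x = x1 @ x2" "set x1 = B" "x2 \<in> lang_pow (full_words B) n"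
    by (auto simp: full_words_def)
  show ?case
  proof (cases y)
    case Nil then show ?thesis by simp
  next
    case (Cons c y')
    then have "c \<in> set x1" "subseq y' x2" using Suc x by auto
    then obtain p q where "x1 = p @ c # q" by (meson split_list)
    then have "subseq (c # y') (p @ c # (q @ x2))" using \<open>subseq y' x2\<close> by blast
    then show ?thesis using x Cons \<open>x1 = p @ c # q\<close> by simp
  qed
qed

lemma emb_pat_sub: "emb (atoms u B) y \<Longrightarrow> length y \<le> n \<Longrightarrow> z \<in> pat_lang u B n \<Longrightarrow> subseq y z"
proof (induction u B n arbitrary: y z rule: pat_lang.induct)
  case (1 u0 n)
  then obtain y1 y2 where "y = y1 @ y2" "subseq y1 u0" "emb [] y2"
    using emb_map_Let_dec[of u0 "[]" y] by auto
  then show ?case using 1 by (simp add: emb_Nil_atoms)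
next
  case (2 u0 us B1 Bs n)
  obtain x z' where z: "z = u0 @ x @ z'" "x \<in> lang_pow (full_words B1) n" "z' \<in> pat_lang us Bs n"
    using "2.prems"(3) by auto
  have ey: "emb (map ALet u0 @ AStar B1 # atoms us Bs) y" using "2.prems"(1) by simp
  obtain y1 y' where y: "y = y1 @ y'" "subseq y1 u0" "emb (AStar B1 # atoms us Bs) y'"
    using emb_map_Let_dec[OF ey] by blast
  obtain y2 y3 where y': "y' = y2 @ y3" "set y2 \<subseteq> B1" "emb (atoms us Bs) y3"
    using emb_star_dec[OF y(3)] by blast
  have ly: "length y \<le> n" by (rule "2.prems"(2))
  have l2: "length y2 \<le> n" using ly y y' by simp
  have l3: "length y3 \<le> n" using ly y y' by simp
  have s2: "subseq y2 x" by (rule pow_sub[OF y'(2) l2 z(2)])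
  have s3: "subseq y3 z'" by (rule "2.IH"[OF y'(3) l3 z(3)])
  have "subseq (y1 @ y2 @ y3) (u0 @ x @ z')"
    by (intro list_emb_append_mono y(2) s2 s3)
  then show ?case using y y' z by simp
qed simp_all

lemma adequate_emb: "adequate u B v \<Longrightarrow> emb (atoms u B) y \<longleftrightarrow> subseq y (v (length y))"
proof -
  assume "adequate u B v"
  then have vi: "v (length y) \<in> pat_lang u B (length y)" by (simp add: adequate_def)
  show ?thesis
  proof
    assume "emb (atoms u B) y" then show "subseq y (v (length y))" using emb_pat_sub vi by blast
  next
    assume "subseq y (v (length y))" then show "emb (atoms u B) y"
      using pat_emb[OF vi] subseq_emb by blast
  qed
qed


lemma map_Let_inj: "map ALet a = map ALet b \<Longrightarrow> a = b"
  by (induction a arbitrary: b) (auto simp: Cons_eq_map_conv)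

lemma map_Let_neq: "map ALet a \<noteq> map ALet b @ AStar Y # r"
proof
  assume "map ALet a = map ALet b @ AStar Y # r"
  then have "AStar Y \<in> set (map ALet a)" by (metis in_set_conv_decomp)
  then show False by auto
qed

lemma map_Let_Star: "map ALet a @ AStar X # r = map ALet b @ AStar Y # r' \<Longrightarrow> a = b \<and> X = Y \<and> r = r'"
proof (induction a arbitrary: b)
  case Nil then show ?case by (cases b) auto
next
  case (Cons c a) then show ?case by (cases b) auto
qed

lemma atoms_inj: "length u = Suc (length B) \<Longrightarrow> length t = Suc (length C) \<Longrightarrow> atoms u B = atoms t C
  \<Longrightarrow> u = t \<and> B = C"
proof (induction B arbitrary: u t C)
  case Nil
  then obtain u0 where u: "u = [u0]" by (cases u) auto
  show ?case
  proof (cases C)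
    case Nil
    then obtain t0 where "t = [t0]" using Nil.prems by (cases t) auto
    then show ?thesis using Nil.prems u \<open>C = []\<close> map_Let_inj by auto
  next
    case (Cons C1 Cs)
    then obtain t0 ts where "t = t0 # ts" using Nil.prems by (cases t) auto
    then show ?thesis using Nil.prems u Cons map_Let_neq by auto
  qed
next
  case (Cons B1 Bs)
  then obtain u0 us where u: "u = u0 # us" by (cases u) auto
  show ?case
  proof (cases C)
    case Nil
    then obtain t0 where "t = [t0]" using Cons.prems by (cases t) auto
    then show ?thesis using Cons.prems u Nil map_Let_neq by (metis atoms.simps(1) atoms.simps(2))
  next
    case (Cons C1 Cs)
    then obtain t0 ts where t: "t = t0 # ts" using Cons.prems by (cases t) auto
    have "u0 = t0 \<and> B1 = C1 \<and> atoms us Bs = atoms ts Cs"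
      using map_Let_Star Cons.prems u t Cons by simp
    then show ?thesis using Cons.IH[of us ts Cs] Cons.prems u t Cons by simp
  qed
qed

fun prop_rec :: "'a list list \<Rightarrow> 'a set list \<Rightarrow> bool" where
  "prop_rec [u0] [] = True"
| "prop_rec (u0 # u1 # us) (B # Bs) = (B \<noteq> {} \<and> (u0 \<noteq> [] \<longrightarrow> last u0 \<notin> B) \<and> (u1 \<noteq> [] \<longrightarrow> hd u1 \<notin> B)
     \<and> (u1 = [] \<and> Bs \<noteq> [] \<longrightarrow> \<not> B \<subseteq> hd Bs \<and> \<not> hd Bs \<subseteq> B) \<and> prop_rec (u1 # us) Bs)"
| "prop_rec _ _ = False"

lemma red_app_Let: "red r \<Longrightarrow> (u \<noteq> [] \<and> r \<noteq> [] \<longrightarrow> ok (ALet (last u)) (hd r)) \<Longrightarrow> red (map ALet u @ r)"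
proof (induction u)
  case (Cons a u)
  then show ?case by (cases u) (auto simp: red_Cons)
qed simp

lemma prop_red: "prop_rec u B \<Longrightarrow> red (atoms u B)"
proof (induction u B rule: prop_rec.induct)
  case (2 u0 u1 us B Bs)
  let ?r = "atoms (u1 # us) Bs"
  have rr: "red ?r" using 2 by simp
  have okr: "?r \<noteq> [] \<longrightarrow> ok (AStar B) (hd ?r)"
  proof (cases u1)
    case Nil
    show ?thesis
    proof (cases Bs)
      case Nil then show ?thesis using \<open>u1 = []\<close> by (cases us) auto
    next
      case (Cons C Cs) then show ?thesis using \<open>u1 = []\<close> 2 by auto
    qed
  next
    case (Cons a u1')
    then show ?thesis using 2 by (cases Bs; cases us) auto
  qed
  have "red (AStar B # ?r)" using rr okr 2 by (simp add: red_Cons)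
  then show ?case using red_app_Let[of "AStar B # ?r" u0] 2 by simp
next
  case (1 u0)
  then show ?case using red_app_Let[of "[]" u0] by simp
qed auto

definition P :: "'a list list \<Rightarrow> 'a set list \<Rightarrow> bool" where
  "P u B \<longleftrightarrow> length u = Suc (length B) \<and> (\<forall>i<length B. B!i \<noteq> {}) \<and>
     (\<forall>i<length B. u!i \<noteq> [] \<longrightarrow> last (u!i) \<notin> B!i) \<and>
     (\<forall>i<length B. u!Suc i \<noteq> [] \<longrightarrow> hd (u!Suc i) \<notin> B!i) \<and>
     (\<forall>i. 1 \<le> i \<and> i + 1 < length u \<and> u!i = [] \<longrightarrow> \<not> B!(i-1) \<subseteq> B!i \<and> \<not> B!i \<subseteq> B!(i-1))"

lemma proper_P: "proper_pattern A u B \<Longrightarrow> P u B"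
  unfolding proper_pattern_def fact_pattern_def P_def by auto

lemma P_prop: "P u B \<Longrightarrow> prop_rec u B"
proof (induction B arbitrary: u)
  case Nil
  then obtain u0 where "u = [u0]" unfolding P_def by (cases u) auto
  then show ?case by simp
next
  case (Cons B1 Bs)
  from Cons.prems obtain u0 u1 us where u: "u = u0 # u1 # us"
    unfolding P_def by (cases u; cases "tl u") auto
  note PP = Cons.prems[unfolded P_def u]
  have l: "length (u1 # us) = Suc (length Bs)" using PP by simp
  have c1: "B1 \<noteq> {}" using PP by fastforce
  have c2: "u0 \<noteq> [] \<longrightarrow> last u0 \<notin> B1" using PP by fastforce
  have c3: "u1 \<noteq> [] \<longrightarrow> hd u1 \<notin> B1" using PP by fastforce
  have c4: "u1 = [] \<and> Bs \<noteq> [] \<longrightarrow> \<not> B1 \<subseteq> hd Bs \<and> \<not> hd Bs \<subseteq> B1"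
  proof
    assume a: "u1 = [] \<and> Bs \<noteq> []"
    have "1 \<le> (1::nat) \<and> 1 + 1 < length (u0 # u1 # us) \<and> (u0 # u1 # us)!1 = []"
      using a l by (cases Bs) auto
    then have "\<not> (B1#Bs)!(1-1) \<subseteq> (B1#Bs)!1 \<and> \<not> (B1#Bs)!1 \<subseteq> (B1#Bs)!(1-1)"
      using PP by blast
    then show "\<not> B1 \<subseteq> hd Bs \<and> \<not> hd Bs \<subseteq> B1" using a by (cases Bs) auto
  qed
  have h1: "\<forall>i<length Bs. Bs!i \<noteq> {}"
  proof (intro allI impI)
    fix i assume "i < length Bs"
    then show "Bs!i \<noteq> {}" using PP by (metis Suc_less_eq length_Cons nth_Cons_Suc)
  qed
  have h2: "\<forall>i<length Bs. (u1 # us)!i \<noteq> [] \<longrightarrow> last ((u1 # us)!i) \<notin> Bs!i"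
  proof (intro allI impI)
    fix i assume "i < length Bs" "(u1 # us)!i \<noteq> []"
    then show "last ((u1 # us)!i) \<notin> Bs!i" using PP by (metis Suc_less_eq length_Cons nth_Cons_Suc)
  qed
  have h3: "\<forall>i<length Bs. (u1 # us)!Suc i \<noteq> [] \<longrightarrow> hd ((u1 # us)!Suc i) \<notin> Bs!i"
  proof (intro allI impI)
    fix i assume "i < length Bs" "(u1 # us)!Suc i \<noteq> []"
    then show "hd ((u1 # us)!Suc i) \<notin> Bs!i" using PP by (metis Suc_less_eq length_Cons nth_Cons_Suc)
  qed
  have h4: "\<forall>i. 1 \<le> i \<and> i + 1 < length (u1 # us) \<and> (u1 # us)!i = [] \<longrightarrow>
      \<not> Bs!(i-1) \<subseteq> Bs!i \<and> \<not> Bs!i \<subseteq> Bs!(i-1)"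
  proof (intro allI impI)
    fix i assume a: "1 \<le> i \<and> i + 1 < length (u1 # us) \<and> (u1 # us)!i = []"
    then have "1 \<le> Suc i \<and> Suc i + 1 < length (u0 # u1 # us) \<and> (u0 # u1 # us)!Suc i = []" by simp
    then have "\<not> (B1#Bs)!(Suc i-1) \<subseteq> (B1#Bs)!Suc i \<and> \<not> (B1#Bs)!Suc i \<subseteq> (B1#Bs)!(Suc i-1)"
      using PP by blast
    moreover have "(B1#Bs)!(Suc i - 1) = Bs!(i-1)" using a by (cases i) auto
    ultimately show "\<not> Bs!(i-1) \<subseteq> Bs!i \<and> \<not> Bs!i \<subseteq> Bs!(i-1)" by simp
  qed
  have "P (u1 # us) Bs" unfolding P_def using l h1 h2 h3 h4 by blast
  then have "prop_rec (u1 # us) Bs" using Cons.IH by blast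
  then show ?case using u c1 c2 c3 c4 by simp
qed

lemma proper_red: "proper_pattern A u B \<Longrightarrow> red (atoms u B)"
  using proper_P P_prop prop_red by blast

lemma proper_len: "proper_pattern A u B \<Longrightarrow> length u = Suc (length B)"
  unfolding proper_pattern_def fact_pattern_def by simp

theorem lemma3p2:
  fixes A :: "'a set" and u t :: "'a list list" and B C :: "'a set list"
    and v w :: "nat \<Rightarrow> 'a list"
  assumes "finite A" and "proper_pattern A u B" and "proper_pattern A t C"
    and "adequate u B v" and "adequate t C w"
    and "\<And>n. sim_n n (v n) (w n)"
  shows "u = t \<and> B = C"
proof -
  have eq: "emb (atoms u B) y \<longleftrightarrow> emb (atoms t C) y" for y
  proof -
    have "emb (atoms u B) y \<longleftrightarrow> subseq y (v (length y))" using adequate_emb assms(4) by blast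
    also have "\<dots> \<longleftrightarrow> subseq y (w (length y))" using assms(6)[of "length y"] unfolding sim_n_def by blast
    also have "\<dots> \<longleftrightarrow> emb (atoms t C) y" using adequate_emb assms(5) by blast
    finally show ?thesis .
  qed
  have r1: "red (atoms u B)" and r2: "red (atoms t C)" using proper_red assms(2,3) by blast+
  have "atoms u B = atoms t C"
    by (rule G[OF r1 r2, of "{}"]) (use red_hd[OF r1] red_hd[OF r2] eq in \<open>auto simp: agree_def\<close>)
  then show ?thesis using atoms_inj proper_len assms(2,3) by blast
qed

end
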